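(* Let $\tilde\eta$ be the corner-flip dynamics on $\Omega^0_L$ started from $\eta_0\in\Omega_L^0$ with $\eta_0(x)\ge\min(x+L,\,L-x,\,L^{3/4})$ for all $x$. Then with probability tending to $1$ as $L\to\infty$, $$\tilde\eta(x,t)\ge-L^{3/4}\quad\forall x\in\{-L,\dots,L\},\ \forall t\in[0,\exp(L^{1/4})].$$
   Context: $\Omega^0_L$ is the set of $\eta\in\mathbb Z^{2L+1}$ indexed by $\{-L,\dots,L\}$ with $\eta_{-L}=\eta_L=0$ and $|\eta_{x+1}-\eta_x|=1$ (no sign constraint). For $x\in\{-L+1,\dots,L-1\}$, $\eta^{(x)}$ coincides with $\eta$ except at $x$, where $\eta^{(x)}_x=\eta_x+2$ if $\eta_{x\pm1}=\eta_x+1$, $\eta_x-2$ if $\eta_{x\pm1}=\eta_x-1$, $\eta_x$ otherwise. The corner-flip dynamics is the continuous-time Markov chain on $\Omega_L^0$ in which each site $x$ carries an independent rate-one Poisson clock and, when it rings, $\eta$ is replaced by $\eta^{(x)}$. *)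

theory Defs
  imports Complex_Main
begin

definition Omega0 :: "nat \<Rightarrow> (int \<Rightarrow> int) set" where
  "Omega0 L = {\<eta>. \<eta> (- int L) = 0 \<and> \<eta> (int L) = 0
      \<and> (\<forall>x\<in>{- int L..<int L}. \<bar>\<eta> (x + 1) - \<eta> x\<bar> = 1)
      \<and> (\<forall>x. x \<notin> {- int L..int L} \<longrightarrow> \<eta> x = 0)}"

definition sites :: "nat \<Rightarrow> int set" where
  "sites L = {- int L + 1 .. int L - 1}"

definition flip :: "(int \<Rightarrow> int) \<Rightarrow> int \<Rightarrow> (int \<Rightarrow> int)" where
  "flip \<eta> x =
     (if \<eta> (x - 1) = \<eta> x + 1 \<and> \<eta> (x + 1) = \<eta> x + 1 then \<eta>(x := \<eta> x + 2)
      else if \<eta> (x - 1) = \<eta> x - 1 \<and> \<eta> (x + 1) = \<eta> x - 1 then \<eta>(x := \<eta> x - 2)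
      else \<eta>)"

fun run :: "(int \<Rightarrow> int) \<Rightarrow> int list \<Rightarrow> (int \<Rightarrow> int)" where
  "run \<eta> [] = \<eta>"
| "run \<eta> (x # xs) = run (flip \<eta> x) xs"

definition good_seq :: "nat \<Rightarrow> real \<Rightarrow> (int \<Rightarrow> int) \<Rightarrow> int list \<Rightarrow> bool" where
  "good_seq L h \<eta>0 xs =
     (\<forall>k\<le>length xs. \<forall>x\<in>{- int L..int L}. real_of_int (run \<eta>0 (take k xs) x) \<ge> - h)"

(* Probability that the corner-flip dynamics started at eta0 satisfies
   eta(x,t) >= -h for all x in {-L..L} and all t in [0,T].
   Construction (exact, by superposition of the 2L-1 independent rate-one clocks):
   the rings in [0,T] form a Poisson(N T) number K of events, N = |sites L|,
   and given K = k, the sequence of ringing sites is i.i.d. uniform on sites L.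
   The path on [0,T] visits exactly the states run eta0 (take j xs), j <= k. *)
definition stay_prob :: "nat \<Rightarrow> real \<Rightarrow> real \<Rightarrow> (int \<Rightarrow> int) \<Rightarrow> real" where
  "stay_prob L h T \<eta>0 =
     (let N = real (card (sites L)) in
      (\<Sum>k. exp (- N * T) * (N * T) ^ k / fact k *
            (real (card {xs. set xs \<subseteq> sites L \<and> length xs = k \<and> good_seq L h \<eta>0 xs})
             / N ^ k)))"

end

theory Submission imports Defs "HOL-Real_Asymp.Real_Asymp" begin

lemma OmegaD:
  assumes "\<zeta> \<in> Omega0 L"
  shows "\<zeta> (- int L) = 0" "\<zeta> (int L) = 0"
    "\<And>x. x \<in> {- int L..<int L} \<Longrightarrow> \<bar>\<zeta> (x + 1) - \<zeta> x\<bar> = 1"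
    "\<And>x. x \<notin> {- int L..int L} \<Longrightarrow> \<zeta> x = 0"
  using assms unfolding Omega0_def by auto

lemma flip_flip: "flip (flip \<zeta> x) x = \<zeta>"
  unfolding flip_def by (auto simp: fun_eq_iff)

lemma flip_other: "y \<noteq> x \<Longrightarrow> flip \<zeta> x y = \<zeta> y"
  unfolding flip_def by auto

lemma flip_Omega:
  assumes "\<zeta> \<in> Omega0 L" "x \<in> sites L"
  shows "flip \<zeta> x \<in> Omega0 L"
proof -
  note D = OmegaD[OF assms(1)]
  have x: "- int L < x" "x < int L" using assms(2) by (auto simp: sites_def)
  show ?thesis
    unfolding Omega0_def
  proof (intro CollectI conjI ballI allI impI)
    show "flip \<zeta> x (- int L) = 0" using D(1) x by (simp add: flip_other)
    show "flip \<zeta> x (int L) = 0" using D(2) x by (simp add: flip_other)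
    fix y assume "y \<notin> {- int L..int L}"
    then show "flip \<zeta> x y = 0" using D(4) x by (subst flip_other) auto
  next
    fix y assume y: "y \<in> {- int L..<int L}"
    have a: "\<bar>\<zeta> (y + 1) - \<zeta> y\<bar> = 1" using D(3) y by auto
    have b: "\<bar>\<zeta> x - \<zeta> (x - 1)\<bar> = 1" using D(3)[of "x - 1"] x by auto
    have c: "\<bar>\<zeta> (x + 1) - \<zeta> x\<bar> = 1" using D(3)[of "x"] x by auto
    show "\<bar>flip \<zeta> x (y + 1) - flip \<zeta> x y\<bar> = 1"
      using a b c unfolding flip_def by (auto simp: abs_if split: if_splits)
  qed
qed

definition hb :: "(int \<Rightarrow> int) \<Rightarrow> int \<Rightarrow> bool \<Rightarrow> (int \<Rightarrow> int)" where
  "hb \<zeta> x c = (if c then (if flip \<zeta> x x > \<zeta> x then flip \<zeta> x else \<zeta>)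
                 else (if flip \<zeta> x x < \<zeta> x then flip \<zeta> x else \<zeta>))"

lemma flip_trichotomy:
  "flip \<zeta> x = \<zeta> \<or> flip \<zeta> x x > \<zeta> x \<or> flip \<zeta> x x < \<zeta> x"
  unfolding flip_def by auto

lemma flip_same: "flip \<zeta> x x = \<zeta> x \<Longrightarrow> flip \<zeta> x = \<zeta>"
  unfolding flip_def by (auto split: if_splits)

lemma hb_pair: "F (hb \<zeta> x True) + F (hb \<zeta> x False) = F (flip \<zeta> x) + (F \<zeta> :: real)"
proof -
  consider "flip \<zeta> x x > \<zeta> x" | "flip \<zeta> x x < \<zeta> x" | "flip \<zeta> x x = \<zeta> x" by linarith
  then show ?thesis
  proof cases
    case 3 then have "flip \<zeta> x = \<zeta>" by (rule flip_same)
    then show ?thesis unfolding hb_def by simp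
  qed (auto simp: hb_def)
qed

lemma hb_Omega: "\<zeta> \<in> Omega0 L \<Longrightarrow> x \<in> sites L \<Longrightarrow> hb \<zeta> x c \<in> Omega0 L"
  unfolding hb_def using flip_Omega by auto

lemma hb_True:
  assumes "\<zeta> \<in> Omega0 L" "x \<in> sites L"
  shows "hb \<zeta> x True = \<zeta>(x := min (\<zeta> (x - 1)) (\<zeta> (x + 1)) + 1)"
proof -
  note D = OmegaD[OF assms(1)]
  have x: "- int L < x" "x < int L" using assms(2) by (auto simp: sites_def)
  have b: "\<bar>\<zeta> x - \<zeta> (x - 1)\<bar> = 1" using D(3)[of "x - 1"] x by auto
  have c: "\<bar>\<zeta> (x + 1) - \<zeta> x\<bar> = 1" using D(3)[of "x"] x by auto
  show ?thesis using b c unfolding hb_def flip_def by (auto simp: fun_eq_iff abs_if split: if_splits)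
qed

lemma hb_False:
  assumes "\<zeta> \<in> Omega0 L" "x \<in> sites L"
  shows "hb \<zeta> x False = \<zeta>(x := max (\<zeta> (x - 1)) (\<zeta> (x + 1)) - 1)"
proof -
  note D = OmegaD[OF assms(1)]
  have x: "- int L < x" "x < int L" using assms(2) by (auto simp: sites_def)
  have b: "\<bar>\<zeta> x - \<zeta> (x - 1)\<bar> = 1" using D(3)[of "x - 1"] x by auto
  have c: "\<bar>\<zeta> (x + 1) - \<zeta> x\<bar> = 1" using D(3)[of "x"] x by auto
  show ?thesis using b c unfolding hb_def flip_def by (auto simp: fun_eq_iff abs_if split: if_splits)
qed

lemma hb_mono:
  assumes "\<eta> \<in> Omega0 L" "\<xi> \<in> Omega0 L" "x \<in> sites L" "\<And>y. \<eta> y \<le> \<xi> y"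
  shows "hb \<eta> x c y \<le> hb \<xi> x c y"
proof (cases c)
  case True
  then show ?thesis using assms(4)[of "x-1"] assms(4)[of "x+1"] assms(4)[of y]
    by (auto simp add: hb_True[OF assms(1,3)] hb_True[OF assms(2,3)] min_def)
next
  case False
  then show ?thesis using assms(4)[of "x-1"] assms(4)[of "x+1"] assms(4)[of y]
    by (auto simp add: hb_False[OF assms(1,3)] hb_False[OF assms(2,3)] max_def)
qed


definition okh :: "nat \<Rightarrow> real \<Rightarrow> (int \<Rightarrow> int) \<Rightarrow> bool" where
  "okh L h \<zeta> = (\<forall>x\<in>{- int L..int L}. real_of_int (\<zeta> x) \<ge> - h)"

lemma good_seq_Nil: "good_seq L h \<zeta> [] = okh L h \<zeta>"
  unfolding good_seq_def okh_def by simp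

lemma good_seq_Cons: "good_seq L h \<zeta> (x # xs) = (okh L h \<zeta> \<and> good_seq L h (flip \<zeta> x) xs)"
proof -
  have "good_seq L h \<zeta> (x # xs) =
     (\<forall>k\<le>Suc (length xs). \<forall>y\<in>{- int L..int L}. real_of_int (run \<zeta> (take k (x # xs)) y) \<ge> - h)"
    unfolding good_seq_def by simp
  also have "\<dots> = ((\<forall>y\<in>{- int L..int L}. real_of_int (run \<zeta> (take 0 (x # xs)) y) \<ge> - h) \<and>
      (\<forall>k\<le>length xs. \<forall>y\<in>{- int L..int L}. real_of_int (run \<zeta> (take (Suc k) (x # xs)) y) \<ge> - h))"
    (is "?A = ?B")
  proof
    assume ?A then show ?B by auto
  next
    assume B: ?B
    show ?A
    proof (intro allI impI)
      fix k assume "k \<le> Suc (length xs)"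
      then show "\<forall>y\<in>{- int L..int L}. - h \<le> real_of_int (run \<zeta> (take k (x # xs)) y)"
        using B by (cases k) auto
    qed
  qed
  also have "\<dots> = (okh L h \<zeta> \<and> good_seq L h (flip \<zeta> x) xs)"
    unfolding good_seq_def okh_def by simp
  finally show ?thesis .
qed

fun Gf :: "nat \<Rightarrow> real \<Rightarrow> nat \<Rightarrow> (int \<Rightarrow> int) \<Rightarrow> real" where
  "Gf L h 0 \<zeta> = (if okh L h \<zeta> then 1 else 0)"
| "Gf L h (Suc k) \<zeta> = (if okh L h \<zeta> then (\<Sum>x\<in>sites L. Gf L h k (flip \<zeta> x)) else 0)"

fun Hf :: "nat \<Rightarrow> real \<Rightarrow> nat \<Rightarrow> (int \<Rightarrow> int) \<Rightarrow> real" where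
  "Hf L h 0 \<zeta> = (if okh L h \<zeta> then 1 else 0)"
| "Hf L h (Suc k) \<zeta> = (if okh L h \<zeta> then
     (\<Sum>x\<in>sites L. Hf L h k (hb \<zeta> x True) + Hf L h k (hb \<zeta> x False)) else 0)"

lemma finite_sites: "finite (sites L)" unfolding sites_def by simp

lemma card_sites: "card (sites L) = 2 * L - 1"
  unfolding sites_def by simp

lemma Gf_bounds: "0 \<le> Gf L h k \<zeta> \<and> Gf L h k \<zeta> \<le> real (card (sites L)) ^ k"
proof (induction k arbitrary: \<zeta>)
  case 0 then show ?case by simp
next
  case (Suc k)
  have "(\<Sum>x\<in>sites L. Gf L h k (flip \<zeta> x)) \<le> (\<Sum>x\<in>sites L. real (card (sites L)) ^ k)"
    by (intro sum_mono) (use Suc in auto)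
  moreover have "0 \<le> (\<Sum>x\<in>sites L. Gf L h k (flip \<zeta> x))"
    by (intro sum_nonneg) (use Suc in auto)
  ultimately show ?case by auto
qed

lemma Hf_bounds: "0 \<le> Hf L h k \<zeta> \<and> Hf L h k \<zeta> \<le> (2 * real (card (sites L))) ^ k"
proof (induction k arbitrary: \<zeta>)
  case 0 then show ?case by simp
next
  case (Suc k)
  have "(\<Sum>x\<in>sites L. Hf L h k (hb \<zeta> x True) + Hf L h k (hb \<zeta> x False))
      \<le> (\<Sum>x\<in>sites L. 2 * (2 * real (card (sites L))) ^ k)"
  proof (intro sum_mono)
    fix x show "Hf L h k (hb \<zeta> x True) + Hf L h k (hb \<zeta> x False) \<le> 2 * (2 * real (card (sites L))) ^ k"
      using Suc[of "hb \<zeta> x True"] Suc[of "hb \<zeta> x False"] by linarith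
  qed
  moreover have "0 \<le> (\<Sum>x\<in>sites L. Hf L h k (hb \<zeta> x True) + Hf L h k (hb \<zeta> x False))"
    by (intro sum_nonneg) (use Suc in \<open>auto intro: add_nonneg_nonneg\<close>)
  ultimately show ?case by (auto simp: mult_ac)
qed

lemma Gf_not_ok: "\<not> okh L h \<zeta> \<Longrightarrow> Gf L h k \<zeta> = 0"
  by (cases k) auto

lemma card_Gf:
  "real (card {xs. set xs \<subseteq> sites L \<and> length xs = k \<and> good_seq L h \<zeta> xs}) = Gf L h k \<zeta>"
proof (induction k arbitrary: \<zeta>)
  case 0
  have "{xs. set xs \<subseteq> sites L \<and> length xs = 0 \<and> good_seq L h \<zeta> xs} =
        (if okh L h \<zeta> then {[]} else {})" by (auto simp: good_seq_Nil)
  then show ?case by simp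
next
  case (Suc k)
  let ?M = "\<lambda>\<zeta> k. {xs. set xs \<subseteq> sites L \<and> length xs = k \<and> good_seq L h \<zeta> xs}"
  show ?case
  proof (cases "okh L h \<zeta>")
    case False
    have "\<And>xs. length xs = Suc k \<Longrightarrow> \<not> good_seq L h \<zeta> xs"
      using False by (auto simp: length_Suc_conv good_seq_Cons)
    then have "?M \<zeta> (Suc k) = {}" by blast
    then show ?thesis using Gf_not_ok[OF False, of "Suc k"] by (metis card.empty of_nat_0)
  next
    case True
    have eq: "?M \<zeta> (Suc k) = (\<Union>x\<in>sites L. (\<lambda>xs. x # xs) ` ?M (flip \<zeta> x) k)"
      using True by (auto simp: length_Suc_conv good_seq_Cons)
    have fin: "\<And>x k. finite (?M x k)"
      by (rule finite_subset[OF _ finite_lists_length_eq[OF finite_sites]]) auto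
    have "card (?M \<zeta> (Suc k)) = (\<Sum>x\<in>sites L. card ((\<lambda>xs. x # xs) ` ?M (flip \<zeta> x) k))"
      unfolding eq by (rule card_UN_disjoint) (use fin finite_sites in auto)
    also have "\<dots> = (\<Sum>x\<in>sites L. card (?M (flip \<zeta> x) k))"
      by (intro sum.cong refl card_image) (auto simp: inj_on_def)
    finally show ?thesis using True Suc by simp
  qed
qed

lemma Hf_Gf:
  "Hf L h m \<zeta> = (\<Sum>k\<le>m. real (m choose k) * real (card (sites L)) ^ (m - k) * Gf L h k \<zeta>)"
proof (induction m arbitrary: \<zeta>)
  case 0 then show ?case by simp
next
  case (Suc m)
  define N where "N = real (card (sites L))"
  show ?case
  proof (cases "okh L h \<zeta>")
    case False then show ?thesis by (simp add: Gf_not_ok)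
  next
    case True
    define f where "f = (\<lambda>k. N ^ (Suc m - k) * Gf L h k \<zeta>)"
    have "Hf L h (Suc m) \<zeta> = (\<Sum>x\<in>sites L. Hf L h m (flip \<zeta> x) + Hf L h m \<zeta>)"
      using True by (simp add: hb_pair)
    also have "\<dots> = (\<Sum>k\<le>m. real (m choose k) * N ^ (m - k) * Gf L h (Suc k) \<zeta>)
                   + N * (\<Sum>k\<le>m. real (m choose k) * N ^ (m - k) * Gf L h k \<zeta>)"
      using True unfolding Suc N_def
      by (simp add: sum.distrib sum_distrib_left sum_distrib_right mult_ac sum.swap[of _ "sites L"])
    also have "\<dots> = (\<Sum>k\<le>m. real (m choose k) * f (Suc k)) + (\<Sum>k\<le>m. real (m choose k) * f k)"
      unfolding f_def by (auto simp: sum_distrib_left mult_ac Suc_diff_le intro!: sum.cong)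
    also have "\<dots> = (\<Sum>k\<le>Suc m. real (Suc m choose k) * f k)"
    proof -
      have "(\<Sum>k\<le>Suc m. real (Suc m choose k) * f k) = f 0 + (\<Sum>k\<le>m. real (Suc m choose Suc k) * f (Suc k))"
        by (subst sum.atMost_Suc_shift) simp
      also have "\<dots> = f 0 + (\<Sum>k\<le>m. real (m choose k) * f (Suc k)) + (\<Sum>k\<le>m. real (m choose Suc k) * f (Suc k))"
        by (simp add: sum.distrib algebra_simps)
      also have "(\<Sum>k\<le>m. real (m choose Suc k) * f (Suc k)) = (\<Sum>k\<le>Suc m. real (m choose k) * f k) - f 0"
      proof -
        have "(\<Sum>k\<le>Suc m. real (m choose k) * f k) = f 0 + (\<Sum>k\<le>m. real (m choose Suc k) * f (Suc k))"
          by (subst sum.atMost_Suc_shift) simp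
        then show ?thesis by linarith
      qed
      also have "(\<Sum>k\<le>Suc m. real (m choose k) * f k) = (\<Sum>k\<le>m. real (m choose k) * f k)"
        by simp
      finally show ?thesis by simp
    qed
    finally show ?thesis unfolding f_def N_def by (simp add: mult.assoc)
  qed
qed


lemma okh_mono: "okh L h \<eta> \<Longrightarrow> (\<And>y. \<eta> y \<le> \<xi> y) \<Longrightarrow> okh L h \<xi>"
  unfolding okh_def by (meson of_int_le_iff order_trans)

lemma Hf_mono:
  assumes "\<eta> \<in> Omega0 L" "\<xi> \<in> Omega0 L" "\<And>y. \<eta> y \<le> \<xi> y"
  shows "Hf L h m \<eta> \<le> Hf L h m \<xi>"
  using assms
proof (induction m arbitrary: \<eta> \<xi>)
  case 0 then show ?case using okh_mono[of L h \<eta> \<xi>] by auto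
next
  case (Suc m)
  show ?case
  proof (cases "okh L h \<eta>")
    case False then show ?thesis using Hf_bounds[of L h "Suc m" \<xi>] by simp
  next
    case True
    then have "okh L h \<xi>" using okh_mono Suc.prems(3) by blast
    moreover have "(\<Sum>x\<in>sites L. Hf L h m (hb \<eta> x True) + Hf L h m (hb \<eta> x False))
       \<le> (\<Sum>x\<in>sites L. Hf L h m (hb \<xi> x True) + Hf L h m (hb \<xi> x False))"
    proof (intro sum_mono add_mono)
      fix x assume x: "x \<in> sites L"
      show "Hf L h m (hb \<eta> x True) \<le> Hf L h m (hb \<xi> x True)"
        by (intro Suc.IH hb_Omega x Suc.prems hb_mono[OF Suc.prems(1,2) x])
      show "Hf L h m (hb \<eta> x False) \<le> Hf L h m (hb \<xi> x False)"
        by (intro Suc.IH hb_Omega x Suc.prems hb_mono[OF Suc.prems(1,2) x])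
    qed
    ultimately show ?thesis using True by simp
  qed
qed

lemma exp_sums_real: "(\<lambda>k. (x::real) ^ k / fact k) sums exp x"
  using exp_converges[of x] by (simp add: divide_inverse mult.commute)

lemma stay_prob_alt:
  "stay_prob L h T \<zeta> = (\<Sum>k. exp (- real (card (sites L)) * T) * (real (card (sites L)) * T) ^ k / fact k
      * (Gf L h k \<zeta> / real (card (sites L)) ^ k))"
  unfolding stay_prob_def Let_def card_Gf ..

lemma poisson_sums:
  "(\<lambda>k. exp (- (x::real)) * x ^ k / fact k) sums 1"
proof -
  have "(\<lambda>k. exp (- x) * (x ^ k / fact k)) sums (exp (- x) * exp x)"
    by (intro sums_mult exp_sums_real)
  then show ?thesis by (simp add: exp_minus field_simps)
qed

lemma pg_bound:
  fixes p g :: real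
  shows "0 \<le> p \<Longrightarrow> 0 \<le> g \<Longrightarrow> g \<le> 1 \<Longrightarrow> 0 \<le> p * g \<and> p * g \<le> p \<and> \<bar>p * g\<bar> \<le> p"
  by (simp add: mult_left_le)

lemma stay_sums:
  assumes "T \<ge> 0"
  shows "(\<lambda>k. exp (- real (card (sites L)) * T) * (real (card (sites L)) * T) ^ k / fact k
      * (Gf L h k \<zeta> / real (card (sites L)) ^ k)) sums stay_prob L h T \<zeta>"
proof -
  define N where "N = real (card (sites L))"
  have le: "\<bar>exp (- N * T) * (N * T) ^ k / fact k * (Gf L h k \<zeta> / N ^ k)\<bar>
      \<le> exp (- N * T) * (N * T) ^ k / fact k" for k
  proof -
    have "0 \<le> Gf L h k \<zeta> / N ^ k" "Gf L h k \<zeta> / N ^ k \<le> 1"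
      using Gf_bounds[of L h k \<zeta>] unfolding N_def by (auto simp: divide_le_eq_1)
    moreover have "0 \<le> exp (- N * T) * (N * T) ^ k / fact k" unfolding N_def using assms by simp
    ultimately show ?thesis using pg_bound by blast
  qed
  have "summable (\<lambda>k. exp (- N * T) * (N * T) ^ k / fact k * (Gf L h k \<zeta> / N ^ k))"
    by (rule summable_comparison_test[OF _ sums_summable[OF poisson_sums[of "N * T"]]])
      (use le in \<open>auto simp: mult_minus_left\<close>)
  then show ?thesis unfolding stay_prob_alt N_def by (rule summable_sums)
qed

lemma stay_le1:
  assumes "T \<ge> 0"
  shows "0 \<le> stay_prob L h T \<zeta> \<and> stay_prob L h T \<zeta> \<le> 1"
proof -
  define N where "N = real (card (sites L))"
  have A: "(\<lambda>k. exp (- N * T) * (N * T) ^ k / fact k * (Gf L h k \<zeta> / N ^ k)) sums stay_prob L h T \<zeta>"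
    using stay_sums[OF assms] unfolding N_def .
  have B: "(\<lambda>k. exp (- N * T) * (N * T) ^ k / fact k) sums 1"
    using poisson_sums[of "N * T"] by (simp add: mult_minus_left)
  have t: "0 \<le> exp (- N * T) * (N * T) ^ k / fact k * (Gf L h k \<zeta> / N ^ k) \<and>
      exp (- N * T) * (N * T) ^ k / fact k * (Gf L h k \<zeta> / N ^ k) \<le> exp (- N * T) * (N * T) ^ k / fact k" for k
  proof -
    have "0 \<le> Gf L h k \<zeta> / N ^ k" "Gf L h k \<zeta> / N ^ k \<le> 1"
      using Gf_bounds[of L h k \<zeta>] unfolding N_def by (auto simp: divide_le_eq_1)
    moreover have "0 \<le> exp (- N * T) * (N * T) ^ k / fact k" unfolding N_def using assms by simp
    ultimately show ?thesis using pg_bound by blast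
  qed
  have "0 \<le> stay_prob L h T \<zeta>" by (rule sums_le[OF _ sums_zero A]) (use t in auto)
  moreover have "stay_prob L h T \<zeta> \<le> 1" by (rule sums_le[OF _ A B]) (use t in auto)
  ultimately show ?thesis by simp
qed

lemma stay_HB_sums:
  assumes "T \<ge> 0" "card (sites L) > 0"
  shows "(\<lambda>m. exp (- 2 * real (card (sites L)) * T) * (T ^ m / fact m * Hf L h m \<zeta>)) sums stay_prob L h T \<zeta>"
proof -
  define N where "N = real (card (sites L))"
  have N: "N > 0" using assms unfolding N_def by simp
  define a where "a = (\<lambda>k. T ^ k / fact k * Gf L h k \<zeta>)"
  define b where "b = (\<lambda>k. (N * T) ^ k / fact k)"
  have bs: "b sums exp (N * T)" unfolding b_def by (rule exp_sums_real)
  have anorm: "norm (a k) \<le> b k" for k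
  proof -
    have "T ^ k / fact k * Gf L h k \<zeta> \<le> T ^ k / fact k * N ^ k"
      using Gf_bounds[of L h k \<zeta>] assms unfolding N_def by (intro mult_left_mono) auto
    then show ?thesis using Gf_bounds[of L h k \<zeta>] assms
      unfolding a_def b_def by (simp add: power_mult_distrib abs_mult mult_ac)
  qed
  have sa: "summable (\<lambda>k. norm (a k))"
    by (rule summable_comparison_test[OF _ sums_summable[OF bs]]) (use anorm in auto)
  have sb: "summable (\<lambda>k. norm (b k))"
    using sums_summable[OF bs] assms N unfolding b_def by simp
  have C: "(\<lambda>m. \<Sum>i\<le>m. a i * b (m - i)) sums (suminf a * suminf b)"
    by (rule Cauchy_product_sums[OF sa sb])
  have trm: "(\<Sum>i\<le>m. a i * b (m - i)) = T ^ m / fact m * Hf L h m \<zeta>" for m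
  proof -
    have "(\<Sum>i\<le>m. a i * b (m - i)) =
        (\<Sum>i\<le>m. T ^ m / fact m * (real (m choose i) * N ^ (m - i) * Gf L h i \<zeta>))"
    proof (intro sum.cong refl)
      fix i assume "i \<in> {..m}"
      then have i: "i \<le> m" by simp
      have TT: "T ^ i * T ^ (m - i) = T ^ m" using i by (simp add: power_add[symmetric])
      show "a i * b (m - i) = T ^ m / fact m * (real (m choose i) * N ^ (m - i) * Gf L h i \<zeta>)"
        unfolding a_def b_def binomial_fact[OF i] using TT
        by (simp add: power_mult_distrib field_simps)
    qed
    also have "\<dots> = T ^ m / fact m * Hf L h m \<zeta>"
      unfolding Hf_Gf[of L h m \<zeta>] N_def by (simp add: sum_distrib_left)
    finally show ?thesis .
  qed
  have sumb: "suminf b = exp (N * T)" using bs by (rule sums_unique[symmetric])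
  have HB: "(\<lambda>m. exp (- 2 * N * T) * (T ^ m / fact m * Hf L h m \<zeta>)) sums
      (exp (- 2 * N * T) * (suminf a * exp (N * T)))"
    by (rule sums_mult) (use C trm sumb in simp)
  have "stay_prob L h T \<zeta> = (\<Sum>k. exp (- N * T) * a k)"
    unfolding stay_prob_alt N_def[symmetric] a_def
    by (intro suminf_cong) (use N in \<open>simp add: power_mult_distrib field_simps\<close>)
  also have "\<dots> = exp (- N * T) * suminf a"
    by (rule suminf_mult) (use sa summable_norm_cancel in blast)
  also have "\<dots> = exp (- 2 * N * T) * (suminf a * exp (N * T))"
    by (simp add: mult_ac flip: exp_add)
  finally show ?thesis using HB unfolding N_def by simp
qed

lemma stay_mono:
  assumes "T \<ge> 0" "card (sites L) > 0" "\<eta> \<in> Omega0 L" "\<xi> \<in> Omega0 L" "\<And>y. \<eta> y \<le> \<xi> y"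
  shows "stay_prob L h T \<eta> \<le> stay_prob L h T \<xi>"
proof (rule sums_le[OF _ stay_HB_sums[OF assms(1,2)] stay_HB_sums[OF assms(1,2)]])
  fix n
  have "Hf L h n \<eta> \<le> Hf L h n \<xi>" by (rule Hf_mono[OF assms(3,4,5)])
  then show "exp (- 2 * real (card (sites L)) * T) * (T ^ n / fact n * Hf L h n \<eta>)
    \<le> exp (- 2 * real (card (sites L)) * T) * (T ^ n / fact n * Hf L h n \<xi>)"
    using assms(1) by (intro mult_left_mono) auto
qed

definition enc :: "nat \<Rightarrow> (int \<Rightarrow> int) \<Rightarrow> nat set" where
  "enc L \<zeta> = {i. i < 2 * L \<and> \<zeta> (- int L + int i + 1) = \<zeta> (- int L + int i) + 1}"

lemma enc_sub: "enc L \<zeta> \<subseteq> {..<2 * L}" unfolding enc_def by auto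

lemma enc_formula:
  assumes "\<zeta> \<in> Omega0 L" "n \<le> 2 * L"
  shows "\<zeta> (- int L + int n) = 2 * int (card (enc L \<zeta> \<inter> {..<n})) - int n"
  using assms(2)
proof (induction n)
  case 0 then show ?case using OmegaD(1)[OF assms(1)] by simp
next
  case (Suc n)
  then have n: "n < 2 * L" by simp
  have inc: "\<bar>\<zeta> (- int L + int n + 1) - \<zeta> (- int L + int n)\<bar> = 1"
    using OmegaD(3)[OF assms(1), of "- int L + int n"] n by auto
  have IH: "\<zeta> (- int L + int n) = 2 * int (card (enc L \<zeta> \<inter> {..<n})) - int n"
    using Suc n by simp
  have fin: "finite (enc L \<zeta> \<inter> {..<n})" by simp
  show ?case
  proof (cases "n \<in> enc L \<zeta>")
    case True
    then have "enc L \<zeta> \<inter> {..<Suc n} = insert n (enc L \<zeta> \<inter> {..<n})" by auto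
    moreover have "\<zeta> (- int L + int n + 1) = \<zeta> (- int L + int n) + 1"
      using True unfolding enc_def by auto
    ultimately show ?thesis using IH fin by (simp add: add.commute add.left_commute)
  next
    case False
    then have "enc L \<zeta> \<inter> {..<Suc n} = enc L \<zeta> \<inter> {..<n}" by (auto simp: less_Suc_eq)
    moreover have "\<zeta> (- int L + int n + 1) = \<zeta> (- int L + int n) - 1"
      using False n inc unfolding enc_def by (auto simp: abs_if split: if_splits)
    ultimately show ?thesis using IH by (simp add: add.commute add.left_commute)
  qed
qed

lemma enc_inj: "inj_on (enc L) (Omega0 L)"
proof (rule inj_onI)
  fix \<zeta> \<xi> assume z: "\<zeta> \<in> Omega0 L" and x: "\<xi> \<in> Omega0 L" and e: "enc L \<zeta> = enc L \<xi>"
  show "\<zeta> = \<xi>"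
  proof
    fix y
    show "\<zeta> y = \<xi> y"
    proof (cases "y \<in> {- int L..int L}")
      case True
      define n where "n = nat (y + int L)"
      have y: "y = - int L + int n" "n \<le> 2 * L" using True unfolding n_def by auto
      show ?thesis unfolding y(1) enc_formula[OF z y(2)] enc_formula[OF x y(2)] e ..
    next
      case False then show ?thesis using OmegaD(4)[OF z] OmegaD(4)[OF x] by simp
    qed
  qed
qed

lemma finite_Omega: "finite (Omega0 L)"
  using inj_on_finite[OF enc_inj, where B = "Pow {..<2 * L}"] by (auto simp: enc_def)

lemma Omega_upper:
  assumes "\<zeta> \<in> Omega0 L" "x \<in> {- int L..int L}"
  shows "\<zeta> x \<le> x + int L \<and> \<zeta> x \<le> int L - x"
proof -
  define n where "n = nat (x + int L)"
  have y: "x = - int L + int n" "n \<le> 2 * L" using assms(2) unfolding n_def by auto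
  have c1: "card (enc L \<zeta> \<inter> {..<n}) \<le> n"
    by (rule order_trans[OF card_mono[of "{..<n}"]]) auto
  have full: "\<zeta> (- int L + int (2 * L)) = 2 * int (card (enc L \<zeta> \<inter> {..<2 * L})) - int (2 * L)"
    by (rule enc_formula[OF assms(1)]) simp
  have "\<zeta> (- int L + int (2 * L)) = 0" using OmegaD(2)[OF assms(1)] by simp
  then have cL: "card (enc L \<zeta> \<inter> {..<2 * L}) = L" using full by simp
  have c2: "card (enc L \<zeta> \<inter> {..<n}) \<le> card (enc L \<zeta> \<inter> {..<2 * L})"
    by (rule card_mono) (use y in auto)
  show ?thesis using enc_formula[OF assms(1) y(2)] c1 c2 cL y(1) by simp
qed

lemma neg_Omega: "\<zeta> \<in> Omega0 L \<Longrightarrow> (\<lambda>x. - \<zeta> x) \<in> Omega0 L"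
  unfolding Omega0_def by (auto simp: abs_minus_commute)

definition dec :: "nat \<Rightarrow> nat set \<Rightarrow> int \<Rightarrow> int" where
  "dec L A x = (if x \<in> {- int L..int L} then 2 * int (card (A \<inter> {..<nat (x + int L)})) - (x + int L) else 0)"

lemma dec_step:
  assumes "x \<in> {- int L..<int L}"
  shows "dec L A (x + 1) - dec L A x = (if nat (x + int L) \<in> A then 1 else -1)"
proof -
  have e: "nat (x + 1 + int L) = Suc (nat (x + int L))" using assms by auto
  have fin: "finite (A \<inter> {..<nat (x + int L)})" by simp
  show ?thesis
  proof (cases "nat (x + int L) \<in> A")
    case True
    then have "A \<inter> {..<Suc (nat (x + int L))} = insert (nat (x + int L)) (A \<inter> {..<nat (x + int L)})"
      by auto
    then show ?thesis using assms True fin unfolding dec_def e by auto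
  next
    case False
    then have "A \<inter> {..<Suc (nat (x + int L))} = A \<inter> {..<nat (x + int L)}"
      by (auto simp: less_Suc_eq)
    then show ?thesis using assms False unfolding dec_def e by auto
  qed
qed

lemma dec_Omega:
  assumes "A \<subseteq> {..<2 * L}" "card A = L"
  shows "dec L A \<in> Omega0 L"
  unfolding Omega0_def
proof (intro CollectI conjI ballI allI impI)
  show "dec L A (- int L) = 0" unfolding dec_def by simp
  have "A \<inter> {..<2 * L} = A" using assms(1) by auto
  moreover have "nat (int L + int L) = 2 * L" by simp
  moreover have "dec L A (int L) = 2 * int (card (A \<inter> {..<nat (int L + int L)})) - (int L + int L)"
    unfolding dec_def by simp
  ultimately show "dec L A (int L) = 0" using assms(2) by simp
  fix x assume "x \<in> {- int L..<int L}"
  then show "\<bar>dec L A (x + 1) - dec L A x\<bar> = 1" using dec_step[of x L A] by simp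
next
  fix x assume "x \<notin> {- int L..int L}"
  then show "dec L A x = 0" unfolding dec_def by (simp only: if_False)
qed

lemma enc_dec:
  assumes "A \<subseteq> {..<2 * L}"
  shows "enc L (dec L A) = A"
proof -
  have "i \<in> enc L (dec L A) \<longleftrightarrow> i \<in> A" for i
  proof (cases "i < 2 * L")
    case True
    have s: "dec L A (- int L + int i + 1) - dec L A (- int L + int i) = (if i \<in> A then 1 else -1)"
      using dec_step[of "- int L + int i" L A] True by simp
    show ?thesis unfolding enc_def using True s by (auto split: if_splits)
  next
    case False then show ?thesis using assms unfolding enc_def by auto
  qed
  then show ?thesis by auto
qed

lemma card_Omega_lower: "real ((2 * L) choose L) \<le> real (card (Omega0 L))"
proof -
  let ?S = "{A. A \<subseteq> {..<2 * L} \<and> card A = L}"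
  have "card ?S = (2 * L) choose L" using n_subsets[of "{..<2 * L}" L] by simp
  moreover have "inj_on (dec L) ?S"
    by (rule inj_on_inverseI[where g = "enc L"]) (auto simp: enc_dec)
  moreover have "dec L ` ?S \<subseteq> Omega0 L" using dec_Omega by auto
  ultimately have "(2 * L) choose L \<le> card (Omega0 L)"
    by (metis card_image card_mono finite_Omega)
  then show ?thesis by simp
qed

lemma pow_weight:
  fixes a :: real
  assumes "finite S"
  shows "(\<Sum>A\<in>Pow S. a ^ card (A \<inter> T)) = (1 + a) ^ card (S \<inter> T) * 2 ^ card (S - T)"
  using assms
proof (induction S rule: finite_induct)
  case empty then show ?case by simp
next
  case (insert x S)
  have disj: "Pow S \<inter> insert x ` Pow S = {}" using insert.hyps by auto
  have inj: "inj_on (insert x) (Pow S)" using insert.hyps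
    by (auto simp: inj_on_def)
  have c: "card (insert x A \<inter> T) = card (A \<inter> T) + (if x \<in> T then 1 else 0)" if "A \<in> Pow S" for A
  proof -
    have fin: "finite (A \<inter> T)" using that insert.hyps(1) by (auto intro: finite_subset)
    have "x \<notin> A \<inter> T" using that insert.hyps(2) by auto
    then show ?thesis using fin by (cases "x \<in> T") (simp_all add: Int_insert_left)
  qed
  have "(\<Sum>A\<in>Pow (insert x S). a ^ card (A \<inter> T)) =
        (\<Sum>A\<in>Pow S. a ^ card (A \<inter> T)) + (\<Sum>A\<in>insert x ` Pow S. a ^ card (A \<inter> T))"
    unfolding Pow_insert by (rule sum.union_disjoint) (use insert.hyps disj in auto)
  also have "(\<Sum>A\<in>insert x ` Pow S. a ^ card (A \<inter> T)) = (\<Sum>A\<in>Pow S. a ^ card (insert x A \<inter> T))"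
    by (rule sum.reindex[OF inj, unfolded comp_def])
  also have "\<dots> = (if x \<in> T then a else 1) * (\<Sum>A\<in>Pow S. a ^ card (A \<inter> T))"
    by (simp add: sum_distrib_left c)
  finally have e: "(\<Sum>A\<in>Pow (insert x S). a ^ card (A \<inter> T)) = (1 + (if x \<in> T then a else 1)) * (\<Sum>A\<in>Pow S. a ^ card (A \<inter> T))"
    by (simp add: algebra_simps)
  show ?case
  proof (cases "x \<in> T")
    case True
    have "insert x S \<inter> T = insert x (S \<inter> T)" "insert x S - T = S - T" using True by auto
    moreover have "x \<notin> S \<inter> T" using insert.hyps by auto
    ultimately show ?thesis using e True insert by simp
  next
    case False
    have "insert x S \<inter> T = S \<inter> T" "insert x S - T = insert x (S - T)" using False by auto
    moreover have "x \<notin> S - T" using insert.hyps by auto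
    ultimately show ?thesis using e False insert by simp
  qed
qed

lemma cosh_bound:
  fixes t :: real
  assumes "0 \<le> t" "t \<le> 1"
  shows "exp t + exp (- t) \<le> 2 * exp (t\<^sup>2)"
proof -
  have e1: "exp t \<le> 1 + t + t\<^sup>2" by (rule exp_bound[OF assms])
  have pos: "0 < 1 + t + t\<^sup>2 / 2" using assms by (simp add: add_pos_nonneg)
  have low: "1 + t + t\<^sup>2 / 2 \<le> exp t"
  proof -
    have "1 + t + t\<^sup>2 / 2 \<le> exp t" using exp_lower_Taylor_quadratic[OF assms(1)] by simp
    then show ?thesis .
  qed
  have "exp (- t) = 1 / exp t" by (simp add: exp_minus field_simps)
  also have "\<dots> \<le> 1 / (1 + t + t\<^sup>2 / 2)" using pos low by (intro divide_left_mono) auto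
  also have "\<dots> \<le> 1 - t + t\<^sup>2"
  proof -
    have eq: "(1 - t + t\<^sup>2) * (1 + t + t\<^sup>2 / 2) = 1 + (t * t) / 2 + (t * t * t) / 2 + (t * t * t * t) / 2"
      unfolding power2_eq_square by (simp add: algebra_simps divide_simps)
    have "0 \<le> (t * t) / 2 + (t * t * t) / 2 + (t * t * t * t) / 2" using assms by simp
    then have "1 \<le> (1 - t + t\<^sup>2) * (1 + t + t\<^sup>2 / 2)" unfolding eq by linarith
    then show ?thesis using pos by (simp add: divide_le_eq)
  qed
  finally have e2: "exp (- t) \<le> 1 - t + t\<^sup>2" .
  have "1 + t\<^sup>2 \<le> exp (t\<^sup>2)" by (rule exp_ge_add_one_self)
  then show ?thesis using e1 e2 by linarith
qed

definition Tl :: "nat \<Rightarrow> real \<Rightarrow> nat \<Rightarrow> nat set set" where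
  "Tl L h n = {A \<in> Pow {..<2 * L}. 2 * real (card (A \<inter> {..<n})) - real n < - h}"

lemma Tl_bound:
  assumes "h > 0" "n \<le> 2 * L" "L \<ge> 1"
  shows "real (card (Tl L h n)) \<le> 4 ^ L * exp (- h\<^sup>2 / (8 * real L))"
proof (cases "h < real n")
  case False
  then have "Tl L h n = {}" unfolding Tl_def by auto
  then show ?thesis by simp
next
  case True
  have npos: "real n > 0" using True assms by linarith
  define t where "t = h / (2 * real n)"
  have t: "0 < t" "t \<le> 1" using assms True npos unfolding t_def by (auto simp: field_simps)
  define a where "a = exp (- 2 * t)"
  have fin: "finite (Tl L h n)" unfolding Tl_def by simp
  have lowA: "exp (- t * (real n - h)) \<le> a ^ card (A \<inter> {..<n})" if "A \<in> Tl L h n" for A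
  proof -
    have "2 * real (card (A \<inter> {..<n})) - real n < - h" using that unfolding Tl_def by auto
    then have "2 * real (card (A \<inter> {..<n})) \<le> real n - h" by linarith
    then have "t * (2 * real (card (A \<inter> {..<n}))) \<le> t * (real n - h)"
      by (rule mult_left_mono) (use t in auto)
    then have "- t * (real n - h) \<le> real (card (A \<inter> {..<n})) * (- 2 * t)" by (simp add: algebra_simps)
    then have "exp (- t * (real n - h)) \<le> exp (real (card (A \<inter> {..<n})) * (- 2 * t))"
      by simp
    also have "\<dots> = a ^ card (A \<inter> {..<n})" unfolding a_def by (rule exp_of_nat_mult)
    finally show ?thesis .
  qed
  have "real (card (Tl L h n)) * exp (- t * (real n - h)) = (\<Sum>A\<in>Tl L h n. exp (- t * (real n - h)))"
    by simp
  also have "\<dots> \<le> (\<Sum>A\<in>Tl L h n. a ^ card (A \<inter> {..<n}))" by (rule sum_mono) (rule lowA)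
  also have "\<dots> \<le> (\<Sum>A\<in>Pow {..<2 * L}. a ^ card (A \<inter> {..<n}))"
    by (rule sum_mono2) (auto simp: Tl_def a_def)
  also have "\<dots> = (1 + a) ^ card ({..<2 * L} \<inter> {..<n}) * 2 ^ card ({..<2 * L} - {..<n})"
    by (rule pow_weight) simp
  also have "\<dots> = (1 + a) ^ n * 2 ^ (2 * L - n)"
  proof -
    have "{..<2 * L} \<inter> {..<n} = {..<n}" "{..<2 * L} - {..<n} = {n..<2 * L}" using assms by auto
    then show ?thesis by simp
  qed
  finally have A: "real (card (Tl L h n)) * exp (- t * (real n - h)) \<le> (1 + a) ^ n * 2 ^ (2 * L - n)" .
  have ee: "exp (- t * (real n - h)) * exp (t * (real n - h)) = 1" by (simp flip: exp_add)
  have "real (card (Tl L h n)) = real (card (Tl L h n)) * exp (- t * (real n - h)) * exp (t * (real n - h))"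
    using ee by (simp add: mult.assoc)
  also have "\<dots> \<le> (1 + a) ^ n * 2 ^ (2 * L - n) * exp (t * (real n - h))"
    by (rule mult_right_mono[OF A]) simp
  finally have "real (card (Tl L h n)) \<le> (1 + a) ^ n * 2 ^ (2 * L - n) * exp (t * (real n - h))" .
  also have "(1 + a) ^ n * 2 ^ (2 * L - n) * exp (t * (real n - h)) =
      (exp t + exp (- t)) ^ n * 2 ^ (2 * L - n) * exp (- t * h)"
  proof -
    have "(1 + a) * exp t = exp t + exp (- t)"
      unfolding a_def by (simp add: algebra_simps flip: exp_add)
    then have "(1 + a) ^ n * exp t ^ n = (exp t + exp (- t)) ^ n"
      by (metis power_mult_distrib)
    moreover have "exp (t * (real n - h)) = exp t ^ n * exp (- t * h)"
    proof -
      have "t * (real n - h) = real n * t + (- t * h)" by (simp add: algebra_simps)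
      then have "exp (t * (real n - h)) = exp (real n * t) * exp (- t * h)" by (simp only: exp_add)
      then show ?thesis by (simp add: exp_of_nat_mult)
    qed
    ultimately show ?thesis by (simp add: mult_ac)
  qed
  also have "\<dots> \<le> (2 * exp (t\<^sup>2)) ^ n * 2 ^ (2 * L - n) * exp (- t * h)"
    using cosh_bound[of t] t
    by (intro mult_right_mono power_mono) (auto simp: add_pos_pos)
  also have "\<dots> = 2 ^ (2 * L) * exp (real n * t\<^sup>2 - t * h)"
  proof -
    have "(2 * exp (t\<^sup>2)) ^ n * 2 ^ (2 * L - n) = 2 ^ (n + (2 * L - n)) * exp (t\<^sup>2) ^ n"
      by (simp add: power_mult_distrib power_add)
    also have "n + (2 * L - n) = 2 * L" using assms by simp
    finally have 1: "(2 * exp (t\<^sup>2)) ^ n * 2 ^ (2 * L - n) = 2 ^ (2 * L) * exp (t\<^sup>2) ^ n" .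
    have 2: "exp (t\<^sup>2) ^ n * exp (- t * h) = exp (real n * t\<^sup>2 - t * h)"
      by (simp add: exp_of_nat_mult[symmetric] exp_add[symmetric])
    show ?thesis using 1 2 by (metis (no_types, lifting) mult.assoc)
  qed
  also have "\<dots> \<le> 4 ^ L * exp (- h\<^sup>2 / (8 * real L))"
  proof -
    have e: "real n * t\<^sup>2 - t * h = - h\<^sup>2 / (4 * real n)"
      unfolding t_def using npos by (simp add: field_simps power2_eq_square)
    have "h\<^sup>2 / (8 * real L) \<le> h\<^sup>2 / (4 * real n)"
      using npos assms by (intro divide_left_mono) auto
    then have "exp (real n * t\<^sup>2 - t * h) \<le> exp (- h\<^sup>2 / (8 * real L))" unfolding e by simp
    moreover have "(2::real) ^ (2 * L) = 4 ^ L" by (simp add: power_mult)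
    ultimately show ?thesis by simp
  qed
  finally show ?thesis .
qed

definition Bad :: "nat \<Rightarrow> real \<Rightarrow> (int \<Rightarrow> int) set" where
  "Bad L h = {\<zeta> \<in> Omega0 L. \<not> okh L h \<zeta>}"

lemma card_Bad:
  assumes "h > 0" "L \<ge> 1"
  shows "real (card (Bad L h)) \<le> (2 * real L + 1) * 4 ^ L * exp (- h\<^sup>2 / (8 * real L))"
proof -
  have sub: "enc L ` Bad L h \<subseteq> (\<Union>n\<in>{..2 * L}. Tl L h n)"
  proof
    fix B assume "B \<in> enc L ` Bad L h"
    then obtain \<zeta> where z: "\<zeta> \<in> Omega0 L" "\<not> okh L h \<zeta>" and B: "B = enc L \<zeta>"
      unfolding Bad_def by auto
    then obtain x where x: "x \<in> {- int L..int L}" "real_of_int (\<zeta> x) < - h"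
      unfolding okh_def by auto
    define n where "n = nat (x + int L)"
    have y: "x = - int L + int n" "n \<le> 2 * L" using x(1) unfolding n_def by auto
    have "\<zeta> x = 2 * int (card (enc L \<zeta> \<inter> {..<n})) - int n"
      unfolding y(1) by (rule enc_formula[OF z(1) y(2)])
    then have "2 * real (card (enc L \<zeta> \<inter> {..<n})) - real n < - h" using x(2)
      by (metis of_int_diff of_int_mult of_int_numeral of_int_of_nat_eq)
    then show "B \<in> (\<Union>n\<in>{..2 * L}. Tl L h n)"
      unfolding B Tl_def using y(2) enc_sub[of L \<zeta>] by auto
  qed
  have inj: "inj_on (enc L) (Bad L h)" by (rule inj_on_subset[OF enc_inj]) (auto simp: Bad_def)
  have "card (Bad L h) = card (enc L ` Bad L h)" using card_image[OF inj] by simp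
  also have "\<dots> \<le> card (\<Union>n\<in>{..2 * L}. Tl L h n)"
    by (rule card_mono[OF _ sub]) (auto simp: Tl_def)
  also have "\<dots> \<le> (\<Sum>n\<le>2 * L. card (Tl L h n))" by (rule card_UN_le) simp
  finally have "real (card (Bad L h)) \<le> (\<Sum>n\<le>2 * L. real (card (Tl L h n)))"
    by (metis of_nat_le_iff of_nat_sum)
  also have "\<dots> \<le> (\<Sum>n\<le>2 * L. 4 ^ L * exp (- h\<^sup>2 / (8 * real L)))"
    by (rule sum_mono) (use Tl_bound assms in auto)
  also have "\<dots> = (2 * real L + 1) * 4 ^ L * exp (- h\<^sup>2 / (8 * real L))" by simp
  finally show ?thesis .
qed



lemma flip_bij: "x \<in> sites L \<Longrightarrow> bij_betw (\<lambda>\<zeta>. flip \<zeta> x) (Omega0 L) (Omega0 L)"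
  by (rule bij_betw_byWitness[where f' = "\<lambda>\<zeta>. flip \<zeta> x"]) (auto simp: flip_flip flip_Omega)

lemma ind_sum: "(\<Sum>\<zeta>\<in>Omega0 L. if okh L h \<zeta> then 0 else (c::real)) = c * real (card (Bad L h))"
proof -
  have "(\<Sum>\<zeta>\<in>Omega0 L. if okh L h \<zeta> then 0 else c) = (\<Sum>\<zeta>\<in>Bad L h. c)"
    unfolding Bad_def by (rule sum.mono_neutral_cong_right) (auto simp: finite_Omega)
  then show ?thesis by simp
qed

lemma stat_k:
  "(\<Sum>\<zeta>\<in>Omega0 L. real (card (sites L)) ^ k - Gf L h k \<zeta>)
     \<le> real (k + 1) * real (card (sites L)) ^ k * real (card (Bad L h))"
proof (induction k)
  case 0
  have "(\<Sum>\<zeta>\<in>Omega0 L. real (card (sites L)) ^ 0 - Gf L h 0 \<zeta>) = (\<Sum>\<zeta>\<in>Omega0 L. if okh L h \<zeta> then 0 else 1)"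
    by (intro sum.cong) auto
  then show ?case using ind_sum[where L=L and h=h and c=1] by simp
next
  case (Suc k)
  define N where "N = real (card (sites L))"
  have D: "N ^ Suc k - Gf L h (Suc k) \<zeta> \<le> (if okh L h \<zeta> then 0 else N ^ Suc k)
      + (\<Sum>x\<in>sites L. N ^ k - Gf L h k (flip \<zeta> x))" for \<zeta>
  proof (cases "okh L h \<zeta>")
    case True
    have "(\<Sum>x\<in>sites L. N ^ k - Gf L h k (flip \<zeta> x)) = N * N ^ k - (\<Sum>x\<in>sites L. Gf L h k (flip \<zeta> x))"
      by (simp add: sum_subtractf N_def)
    then show ?thesis using True by simp
  next
    case False
    have "0 \<le> (\<Sum>x\<in>sites L. N ^ k - Gf L h k (flip \<zeta> x))"
      by (intro sum_nonneg) (use Gf_bounds N_def in auto)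
    then show ?thesis using False by simp
  qed
  have "(\<Sum>\<zeta>\<in>Omega0 L. N ^ Suc k - Gf L h (Suc k) \<zeta>) \<le>
      (\<Sum>\<zeta>\<in>Omega0 L. (if okh L h \<zeta> then 0 else N ^ Suc k) + (\<Sum>x\<in>sites L. N ^ k - Gf L h k (flip \<zeta> x)))"
    by (rule sum_mono) (rule D)
  also have "\<dots> = N ^ Suc k * real (card (Bad L h)) + (\<Sum>x\<in>sites L. \<Sum>\<zeta>\<in>Omega0 L. N ^ k - Gf L h k (flip \<zeta> x))"
    by (simp add: sum.distrib ind_sum sum.swap[of _ "sites L"])
  also have "(\<Sum>x\<in>sites L. \<Sum>\<zeta>\<in>Omega0 L. N ^ k - Gf L h k (flip \<zeta> x)) = (\<Sum>x\<in>sites L. \<Sum>\<zeta>\<in>Omega0 L. N ^ k - Gf L h k \<zeta>)"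
    by (intro sum.cong refl sum.reindex_bij_betw flip_bij)
  finally have A: "(\<Sum>\<zeta>\<in>Omega0 L. N ^ Suc k - Gf L h (Suc k) \<zeta>) \<le> N ^ Suc k * real (card (Bad L h)) + (\<Sum>x\<in>sites L. \<Sum>\<zeta>\<in>Omega0 L. N ^ k - Gf L h k \<zeta>)" .
  have B: "(\<Sum>x\<in>sites L. \<Sum>\<zeta>\<in>Omega0 L. N ^ k - Gf L h k \<zeta>) \<le> (\<Sum>x\<in>sites L. real (k + 1) * N ^ k * real (card (Bad L h)))"
    by (rule sum_mono) (use Suc N_def in simp)
  have C: "N ^ Suc k * real (card (Bad L h)) + (\<Sum>x\<in>sites L. real (k + 1) * N ^ k * real (card (Bad L h))) = real (Suc k + 1) * N ^ Suc k * real (card (Bad L h))"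
    by (simp add: N_def algebra_simps)
  have "(\<Sum>\<zeta>\<in>Omega0 L. N ^ Suc k - Gf L h (Suc k) \<zeta>) \<le> real (Suc k + 1) * N ^ Suc k * real (card (Bad L h))"
    using A B C by linarith
  then show ?case unfolding N_def by simp
qed

lemma poisson_mean: "(\<lambda>k. real k * (exp (- (x::real)) * x ^ k / fact k)) sums x"
proof -
  have "(\<lambda>k. x * (exp (- x) * x ^ k / fact k)) sums (x * 1)"
    by (intro sums_mult poisson_sums)
  moreover have "real (Suc k) * (exp (- x) * x ^ Suc k / fact (Suc k)) = x * (exp (- x) * x ^ k / fact k)" for k
    by (simp only: fact_Suc power_Suc) (simp add: field_simps del: of_nat_Suc)
  ultimately have "(\<lambda>k. real (Suc k) * (exp (- x) * x ^ Suc k / fact (Suc k))) sums x"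
    by (simp only: mult_1_right)
  then show ?thesis by (subst (asm) sums_Suc_iff) simp
qed

lemma stat_sum:
  assumes "T \<ge> 0" "card (sites L) > 0"
  shows "(\<Sum>\<zeta>\<in>Omega0 L. 1 - stay_prob L h T \<zeta>) \<le> (real (card (sites L)) * T + 1) * real (card (Bad L h))"
proof -
  define N where "N = real (card (sites L))"
  have N: "N > 0" using assms unfolding N_def by simp
  define p where "p = (\<lambda>k. exp (- N * T) * (N * T) ^ k / fact k)"
  have ps: "p sums 1" unfolding p_def using poisson_sums[of "N * T"] by (simp add: mult_minus_left)
  have pm: "(\<lambda>k. real k * p k) sums (N * T)" unfolding p_def using poisson_mean[of "N * T"] by (simp add: mult_minus_left)
  have each: "(\<lambda>k. p k * (1 - Gf L h k \<zeta> / N ^ k)) sums (1 - stay_prob L h T \<zeta>)" for \<zeta>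
  proof -
    have "(\<lambda>k. p k - p k * (Gf L h k \<zeta> / N ^ k)) sums (1 - stay_prob L h T \<zeta>)"
      by (rule sums_diff[OF ps]) (use stay_sums[OF assms(1), where L=L and h=h and \<zeta>=\<zeta>] in \<open>simp add: p_def N_def\<close>)
    then show ?thesis by (simp add: algebra_simps)
  qed
  have S: "(\<lambda>k. \<Sum>\<zeta>\<in>Omega0 L. p k * (1 - Gf L h k \<zeta> / N ^ k)) sums (\<Sum>\<zeta>\<in>Omega0 L. 1 - stay_prob L h T \<zeta>)"
    by (rule sums_sum) (rule each)
  have R: "(\<lambda>k. (real k * p k + p k) * real (card (Bad L h))) sums ((N * T + 1) * real (card (Bad L h)))"
    by (intro sums_mult2 sums_add pm ps)
  have le: "(\<Sum>\<zeta>\<in>Omega0 L. p k * (1 - Gf L h k \<zeta> / N ^ k)) \<le> (real k * p k + p k) * real (card (Bad L h))" for k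
  proof -
    have pk: "p k \<ge> 0" unfolding p_def using assms N by simp
    have "(\<Sum>\<zeta>\<in>Omega0 L. p k * (1 - Gf L h k \<zeta> / N ^ k)) = p k / N ^ k * (\<Sum>\<zeta>\<in>Omega0 L. N ^ k - Gf L h k \<zeta>)"
      using N by (simp add: sum_distrib_left field_simps)
    also have "\<dots> \<le> p k / N ^ k * (real (k + 1) * N ^ k * real (card (Bad L h)))"
      using stat_k[where L=L and h=h and k=k] pk N unfolding N_def by (intro mult_left_mono) auto
    also have "\<dots> = (real k * p k + p k) * real (card (Bad L h))" using N by (simp add: field_simps)
    finally show ?thesis .
  qed
  show ?thesis using sums_le[OF le S R] unfolding N_def .
qed


lemma main_bound:
  assumes L: "L \<ge> 1" and h: "h > 0" and T: "T \<ge> 0" and eta: "\<eta>0 \<in> Omega0 L"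
    and hyp: "\<forall>x\<in>{- int L..int L}. real_of_int (\<eta>0 x) \<ge> min (real_of_int (x + int L)) (min (real_of_int (int L - x)) h)"
    and q: "real (card (Bad L h)) \<le> q * real (card (Omega0 L))" "q < 1"
  shows "(1 - q) * (1 - stay_prob L h T \<eta>0) \<le> (real (card (sites L)) * T + 1) * q"
proof -
  have Npos: "card (sites L) > 0" using L card_sites[of L] by simp
  define Ds where "Ds = {\<xi> \<in> Omega0 L. \<forall>x\<in>{- int L..int L}. real_of_int (\<xi> x) \<le> h}"
  define Up where "Up = {\<xi> \<in> Omega0 L. \<not> (\<forall>x\<in>{- int L..int L}. real_of_int (\<xi> x) \<le> h)}"
  have le_eta: "\<xi> y \<le> \<eta>0 y" if "\<xi> \<in> Ds" for \<xi> y
  proof (cases "y \<in> {- int L..int L}")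
    case False
    then show ?thesis using OmegaD(4)[OF eta] OmegaD(4)[of \<xi> L] that unfolding Ds_def by simp
  next
    case True
    have xi: "\<xi> \<in> Omega0 L" "real_of_int (\<xi> y) \<le> h" using that True unfolding Ds_def by auto
    have u: "\<xi> y \<le> y + int L" "\<xi> y \<le> int L - y" using Omega_upper[OF xi(1) True] by auto
    have "real_of_int (\<xi> y) \<le> min (real_of_int (y + int L)) (min (real_of_int (int L - y)) h)"
      using u xi(2) by (simp del: of_int_add of_int_diff)
    also have "\<dots> \<le> real_of_int (\<eta>0 y)" using hyp True by blast
    finally show ?thesis by simp
  qed
  have stay_le: "stay_prob L h T \<xi> \<le> stay_prob L h T \<eta>0" if "\<xi> \<in> Ds" for \<xi>
    by (rule stay_mono[OF T Npos _ eta le_eta[OF that]]) (use that in \<open>auto simp: Ds_def\<close>)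
  have finO: "finite (Omega0 L)" by (rule finite_Omega)
  have cardUp: "card Up \<le> card (Bad L h)"
  proof (rule card_inj_on_le[where f = "\<lambda>\<xi> x. - \<xi> x"])
    show "inj_on (\<lambda>\<xi> x. - \<xi> x) Up" by (auto simp: inj_on_def fun_eq_iff)
    show "(\<lambda>\<xi> x. - \<xi> x) ` Up \<subseteq> Bad L h"
    proof
      fix \<zeta> assume "\<zeta> \<in> (\<lambda>\<xi> x. - \<xi> x) ` Up"
      then obtain \<xi> where xi: "\<xi> \<in> Omega0 L" "\<not> (\<forall>x\<in>{- int L..int L}. real_of_int (\<xi> x) \<le> h)"
        and z: "\<zeta> = (\<lambda>x. - \<xi> x)" unfolding Up_def by auto
      have "\<not> okh L h \<zeta>" using xi(2) unfolding okh_def z by auto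
      then show "\<zeta> \<in> Bad L h" unfolding Bad_def z using neg_Omega[OF xi(1)] by auto
    qed
    show "finite (Bad L h)" using finO unfolding Bad_def by simp
  qed
  have cardO: "card (Omega0 L) = card Ds + card Up"
  proof -
    have "Omega0 L = Ds \<union> Up" "Ds \<inter> Up = {}" unfolding Ds_def Up_def by auto
    moreover have "finite Ds" "finite Up" using finO unfolding Ds_def Up_def by auto
    ultimately show ?thesis by (metis card_Un_disjoint)
  qed
  have Opos: "real (card (Omega0 L)) > 0"
  proof -
    have "0 < (2 * L) choose L" by (rule zero_less_binomial) simp
    then show ?thesis using card_Omega_lower[of L] by linarith
  qed
  define s where "s = stay_prob L h T \<eta>0"
  have s1: "0 \<le> 1 - s" using stay_le1[OF T] unfolding s_def by auto
  have "real (card Ds) * (1 - s) = (\<Sum>\<xi>\<in>Ds. 1 - s)" by simp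
  also have "\<dots> \<le> (\<Sum>\<xi>\<in>Ds. 1 - stay_prob L h T \<xi>)"
    by (rule sum_mono) (use stay_le s_def in auto)
  also have "\<dots> \<le> (\<Sum>\<xi>\<in>Omega0 L. 1 - stay_prob L h T \<xi>)"
    by (rule sum_mono2[OF finO]) (use stay_le1[OF T] in \<open>auto simp: Ds_def\<close>)
  also have "\<dots> \<le> (real (card (sites L)) * T + 1) * real (card (Bad L h))"
    by (rule stat_sum[OF T Npos])
  also have "\<dots> \<le> (real (card (sites L)) * T + 1) * (q * real (card (Omega0 L)))"
    using q(1) T by (intro mult_left_mono) auto
  finally have A: "real (card Ds) * (1 - s) \<le> (real (card (sites L)) * T + 1) * (q * real (card (Omega0 L)))" .
  have "(1 - q) * real (card (Omega0 L)) \<le> real (card Ds)"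
    using cardO cardUp q(1) by (simp add: algebra_simps)
  then have "(1 - q) * real (card (Omega0 L)) * (1 - s) \<le> real (card Ds) * (1 - s)"
    using s1 by (rule mult_right_mono)
  with A have "real (card (Omega0 L)) * ((1 - q) * (1 - s)) \<le> real (card (Omega0 L)) * ((real (card (sites L)) * T + 1) * q)"
    by (simp add: algebra_simps)
  then show ?thesis using Opos unfolding s_def by simp
qed

lemma asym1: "((\<lambda>x::real. (2 * x + 1) * (2 * x) * exp (- (x powr (1/2)) / 8)) \<longlongrightarrow> 0) at_top"
  by real_asymp

lemma asym2: "((\<lambda>x::real. (2 * x * exp (x powr (1/4)) + 1) * ((2 * x + 1) * (2 * x) * exp (- (x powr (1/2)) / 8))) \<longlongrightarrow> 0) at_top"
  by real_asymp



lemma h_sq: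
  assumes "L \<ge> (1::nat)"
  shows "(real L powr (3/4))\<^sup>2 / (8 * real L) = real L powr (1/2) / 8"
proof -
  have Lp: "real L > 0" using assms by simp
  have "(real L powr (3/4))\<^sup>2 = real L powr (3/4) * real L powr (3/4)" by (simp add: power2_eq_square)
  also have "\<dots> = real L powr (3/2)" by (simp flip: powr_add)
  also have "\<dots> = real L powr (1 + 1/2)" by simp
  also have "\<dots> = real L powr 1 * real L powr (1/2)" by (rule powr_add)
  also have "\<dots> = real L * real L powr (1/2)" using Lp by simp
  finally show ?thesis using Lp by simp
qed

theorem lemmaA1:
  shows "\<forall>\<epsilon>>0. \<exists>L0. \<forall>L\<ge>L0. \<forall>\<eta>0\<in>Omega0 L.
           (\<forall>x\<in>{- int L..int L}.
              real_of_int (\<eta>0 x) \<ge> min (real_of_int (x + int L))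
                                          (min (real_of_int (int L - x)) (real L powr (3/4))))
           \<longrightarrow> stay_prob L (real L powr (3/4)) (exp (real L powr (1/4))) \<eta>0 \<ge> 1 - \<epsilon>"
proof (intro allI impI)
  fix \<epsilon> :: real assume eps: "\<epsilon> > 0"
  define qf where "qf = (\<lambda>x::real. (2 * x + 1) * (2 * x) * exp (- (x powr (1/2)) / 8))"
  define gf where "gf = (\<lambda>x::real. (2 * x * exp (x powr (1/4)) + 1) * qf x)"
  have ev1: "eventually (\<lambda>x. qf x < 1/2) at_top"
    using order_tendstoD(2)[OF asym1, of "1/2"] unfolding qf_def by simp
  have ev2: "eventually (\<lambda>x. gf x < \<epsilon> / 2) at_top"
    using order_tendstoD(2)[OF asym2, of "\<epsilon>/2"] eps unfolding gf_def qf_def by simp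
  have ev3: "eventually (\<lambda>x::real. x \<ge> 1) at_top" by (rule eventually_ge_at_top)
  have "eventually (\<lambda>x. qf x < 1/2 \<and> gf x < \<epsilon> / 2 \<and> x \<ge> 1) at_top"
    using ev1 ev2 ev3 by eventually_elim auto
  then have "eventually (\<lambda>n. qf (real n) < 1/2 \<and> gf (real n) < \<epsilon> / 2 \<and> real n \<ge> 1) sequentially"
    by (rule eventually_compose_filterlim[OF _ filterlim_real_sequentially])
  then obtain L0 where L0: "\<And>n. n \<ge> L0 \<Longrightarrow> qf (real n) < 1/2 \<and> gf (real n) < \<epsilon> / 2 \<and> real n \<ge> 1"
    unfolding eventually_sequentially by blast
  show "\<exists>L0. \<forall>L\<ge>L0. \<forall>\<eta>0\<in>Omega0 L.
           (\<forall>x\<in>{- int L..int L}.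
              real_of_int (\<eta>0 x) \<ge> min (real_of_int (x + int L))
                                          (min (real_of_int (int L - x)) (real L powr (3/4))))
           \<longrightarrow> stay_prob L (real L powr (3/4)) (exp (real L powr (1/4))) \<eta>0 \<ge> 1 - \<epsilon>"
  proof (intro exI allI impI ballI)
    fix L :: nat and \<eta>0 assume LL: "L \<ge> L0" and eta: "\<eta>0 \<in> Omega0 L"
      and hyp: "\<forall>x\<in>{- int L..int L}.
              real_of_int (\<eta>0 x) \<ge> min (real_of_int (x + int L))
                                          (min (real_of_int (int L - x)) (real L powr (3/4)))"
    have pr: "qf (real L) < 1/2" "gf (real L) < \<epsilon> / 2" "real L \<ge> 1" using L0[OF LL] by auto
    have L1: "L \<ge> 1" using pr(3) by simp
    define h where "h = real L powr (3/4)"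
    define T where "T = exp (real L powr (1/4))"
    have hpos: "h > 0" unfolding h_def using L1 by simp
    have Tpos: "T \<ge> 0" unfolding T_def by simp
    have qnn: "qf (real L) \<ge> 0" unfolding qf_def by simp
    have bad: "real (card (Bad L h)) \<le> qf (real L) * real (card (Omega0 L))"
    proof -
      have "real (card (Bad L h)) \<le> (2 * real L + 1) * 4 ^ L * exp (- h\<^sup>2 / (8 * real L))"
        by (rule card_Bad[OF hpos L1])
      also have "exp (- h\<^sup>2 / (8 * real L)) = exp (- (real L powr (1/2)) / 8)"
        using h_sq[OF L1] unfolding h_def by (metis minus_divide_left)
      finally have B1: "real (card (Bad L h)) \<le> (2 * real L + 1) * 4 ^ L * exp (- (real L powr (1/2)) / 8)" .
      have "4 ^ L / (2 * real L) \<le> real ((2 * L) choose L)"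
        by (rule central_binomial_lower_bound) (use L1 in simp)
      then have "4 ^ L / (2 * real L) \<le> real (card (Omega0 L))"
        using card_Omega_lower[of L] by linarith
      then have B2: "4 ^ L \<le> 2 * real L * real (card (Omega0 L))"
        using L1 by (simp add: divide_le_eq mult_ac)
      have "(2 * real L + 1) * 4 ^ L * exp (- (real L powr (1/2)) / 8) =
          ((2 * real L + 1) * exp (- (real L powr (1/2)) / 8)) * 4 ^ L" by (simp only: ac_simps)
      also have "\<dots> \<le> ((2 * real L + 1) * exp (- (real L powr (1/2)) / 8)) * (2 * real L * real (card (Omega0 L)))"
        by (rule mult_left_mono[OF B2]) simp
      also have "\<dots> = qf (real L) * real (card (Omega0 L))" unfolding qf_def by (simp only: ac_simps)
      finally show ?thesis using B1 by linarith
    qed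
    have hyp': "\<forall>x\<in>{- int L..int L}. real_of_int (\<eta>0 x) \<ge> min (real_of_int (x + int L)) (min (real_of_int (int L - x)) h)"
      using hyp unfolding h_def .
    have mb: "(1 - qf (real L)) * (1 - stay_prob L h T \<eta>0) \<le> (real (card (sites L)) * T + 1) * qf (real L)"
      by (rule main_bound[OF L1 hpos Tpos eta hyp' bad]) (use pr in simp)
    have s1: "0 \<le> 1 - stay_prob L h T \<eta>0" using stay_le1[OF Tpos] by auto
    have N: "real (card (sites L)) \<le> 2 * real L" using card_sites[of L] by simp
    have "(1 / 2) * (1 - stay_prob L h T \<eta>0) \<le> (1 - qf (real L)) * (1 - stay_prob L h T \<eta>0)"
      using pr(1) s1 by (intro mult_right_mono) auto
    also have "\<dots> \<le> (real (card (sites L)) * T + 1) * qf (real L)" by (rule mb)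
    also have "\<dots> \<le> (2 * real L * T + 1) * qf (real L)"
      using N Tpos qnn by (intro mult_right_mono) (auto intro: mult_right_mono)
    also have "\<dots> = gf (real L)" unfolding gf_def T_def by simp
    finally have fin: "(1 / 2) * (1 - stay_prob L h T \<eta>0) \<le> gf (real L)" .
    have "1 - \<epsilon> \<le> stay_prob L h T \<eta>0"
    proof -
      define s where "s = stay_prob L h T \<eta>0"
      have "1/2 * (1 - s) \<le> gf (real L)" "gf (real L) < \<epsilon> / 2" using fin pr(2) unfolding s_def by auto
      then have "1 - \<epsilon> \<le> s" by (simp add: field_simps)
      then show ?thesis unfolding s_def .
    qed
    then show "stay_prob L (real L powr (3/4)) (exp (real L powr (1/4))) \<eta>0 \<ge> 1 - \<epsilon>"
      unfolding h_def T_def .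
  qed
qed

end
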